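(* Under 2-Approval, $2$-by-$2$ GS-games of type (i) and of type (vi) are both realizable: for each of these two types there exist a finite candidate set $C$, a tie-breaking order on $C$, a profile $V$ and a $2$-by-$2$ GS-game for $V$ under 2-Approval of that type.
   Context: Each voter $i$ has a strict linear order $v_i$ over $C$. 2-Approval: each candidate gets one point from each voter ranking her among his top two; the highest score wins, ties broken in favour of the candidate highest in a fixed strict linear order $>$ on $C$. Write $\mathcal{R}$ for the rule and $(V_{-i},v_i')$ for $V$ with $v_i$ replaced by $v_i'$. A GS-manipulation of voter $i$ at $V$ is a vote $v_i'$ such that $i$ strictly prefers $\mathcal{R}(V_{-i},v_i')$ to $\mathcal{R}(V)$ and for every vote $v_i''$ either $\mathcal{R}(V_{-i},v_i'')=\mathcal{R}(V_{-i},v_i')$ or $i$ strictly prefers $\mathcal{R}(V_{-i},v_i')$ to $\mathcal{R}(V_{-i},v_i'')$; $i$ is a GS-manipulator if he has one. A GS-game for $V$ has as players all GS-manipulators at $V$, each player $i$ having action set consisting of $v_i$ and a subset of his GS-manipulations; other voters vote sincerely. A $2$-by-$2$ GS-game is one with exactly two players $1,2$, with action sets $\{s_1,i_1\}$, $\{s_2,i_2\}$, $s_p=v_p$ sincere and $i_p$ a GS-manipulation. Let $W(a,b)$ be the winner when player 1 plays $a$ and player 2 plays $b$. Set $\rho_1=+$ if player 1 strictly prefers $W(i_1,i_2)$ to $W(s_1,i_2)$, $0$ if they are equal, $-$ if he strictly prefers $W(s_1,i_2)$; define $\rho_2$ analogously for player 2 comparing $W(i_1,i_2)$ with $W(i_1,s_2)$.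 Type (i) means $\{\rho_1,\rho_2\}=\{+,+\}$; type (vi) means $\{\rho_1,\rho_2\}=\{+,-\}$. *)

theory Defs
  imports Main
begin

text \<open>A vote (strict linear order over C) is a list without repetitions whose set is C,
  listing candidates from most to least preferred. The tie-breaking order is also such a list
  (earlier = higher). A profile with n voters is a function V from voters {..<n} to votes.\<close>

definition lin_orders :: "nat set \<Rightarrow> nat list set" where
  "lin_orders C = {r. distinct r \<and> set r = C}"

definition pos :: "nat list \<Rightarrow> nat \<Rightarrow> nat" where
  "pos r a = length (takeWhile (\<lambda>x. x \<noteq> a) r)"

definition prefers :: "nat list \<Rightarrow> nat \<Rightarrow> nat \<Rightarrow> bool" where
  "prefers r a b \<longleftrightarrow> a \<in> set r \<and> b \<in> set r \<and> pos r a < pos r b"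

definition score2 :: "nat \<Rightarrow> (nat \<Rightarrow> nat list) \<Rightarrow> nat \<Rightarrow> nat" where
  "score2 n V c = card {i. i < n \<and> c \<in> set (take 2 (V i))}"

definition winner2 :: "nat list \<Rightarrow> nat \<Rightarrow> (nat \<Rightarrow> nat list) \<Rightarrow> nat" where
  "winner2 T n V = hd (filter (\<lambda>c. \<forall>d\<in>set T. score2 n V d \<le> score2 n V c) T)"

definition gs_manip ::
  "nat set \<Rightarrow> nat list \<Rightarrow> nat \<Rightarrow> (nat \<Rightarrow> nat list) \<Rightarrow> nat \<Rightarrow> nat list \<Rightarrow> bool" where
  "gs_manip C T n V i v' \<longleftrightarrow>
     v' \<in> lin_orders C \<and>
     prefers (V i) (winner2 T n (V(i := v'))) (winner2 T n V) \<and>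
     (\<forall>v'' \<in> lin_orders C.
        winner2 T n (V(i := v'')) = winner2 T n (V(i := v')) \<or>
        prefers (V i) (winner2 T n (V(i := v'))) (winner2 T n (V(i := v''))))"

definition gs_manipulator ::
  "nat set \<Rightarrow> nat list \<Rightarrow> nat \<Rightarrow> (nat \<Rightarrow> nat list) \<Rightarrow> nat \<Rightarrow> bool" where
  "gs_manipulator C T n V i \<longleftrightarrow> i < n \<and> (\<exists>v'. gs_manip C T n V i v')"

definition wf_election :: "nat set \<Rightarrow> nat list \<Rightarrow> nat \<Rightarrow> (nat \<Rightarrow> nat list) \<Rightarrow> bool" where
  "wf_election C T n V \<longleftrightarrow> finite C \<and> T \<in> lin_orders C \<and> (\<forall>i<n. V i \<in> lin_orders C)"

text \<open>A 2-by-2 GS-game: players p1, p2 are exactly the GS-manipulators at V,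
  with action sets {V p1, i1} and {V p2, i2}, i1, i2 GS-manipulations.\<close>
definition gs_game_2x2 ::
  "nat set \<Rightarrow> nat list \<Rightarrow> nat \<Rightarrow> (nat \<Rightarrow> nat list) \<Rightarrow> nat \<Rightarrow> nat \<Rightarrow> nat list \<Rightarrow> nat list \<Rightarrow> bool" where
  "gs_game_2x2 C T n V p1 p2 i1 i2 \<longleftrightarrow>
     p1 < n \<and> p2 < n \<and> p1 \<noteq> p2 \<and>
     {i. gs_manipulator C T n V i} = {p1, p2} \<and>
     gs_manip C T n V p1 i1 \<and> gs_manip C T n V p2 i2"

datatype sign = Pos | Zero | Neg

definition cmp :: "nat list \<Rightarrow> nat \<Rightarrow> nat \<Rightarrow> sign" where
  "cmp r x y = (if prefers r x y then Pos else if prefers r y x then Neg else Zero)"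

definition W :: "nat list \<Rightarrow> nat \<Rightarrow> (nat \<Rightarrow> nat list) \<Rightarrow> nat \<Rightarrow> nat \<Rightarrow> nat list \<Rightarrow> nat list \<Rightarrow> nat" where
  "W T n V p1 p2 a b = winner2 T n (V(p1 := a, p2 := b))"

definition game_type ::
  "nat list \<Rightarrow> nat \<Rightarrow> (nat \<Rightarrow> nat list) \<Rightarrow> nat \<Rightarrow> nat \<Rightarrow> nat list \<Rightarrow> nat list \<Rightarrow> sign set" where
  "game_type T n V p1 p2 i1 i2 =
     {cmp (V p1) (W T n V p1 p2 i1 i2) (W T n V p1 p2 (V p1) i2),
      cmp (V p2) (W T n V p1 p2 i1 i2) (W T n V p1 p2 i1 (V p2))}"

end

theory Submission
  imports Defs
begin

lemma winner_take:
  "winner2 T n (V(i:=v)) = winner2 T n (V(i:=take 2 v))"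
  unfolding winner2_def score2_def by simp

lemma lin_take2:
  assumes "v \<in> lin_orders C" "finite C" "2 \<le> card C"
  shows "\<exists>x y. take 2 v = [x,y] \<and> x \<in> C \<and> y \<in> C \<and> x \<noteq> y"
proof -
  have d: "distinct v" and s: "set v = C" using assms(1) by (auto simp: lin_orders_def)
  have "length v = card C" using distinct_card[OF d] s by simp
  with assms(3) have "2 \<le> length v" by simp
  then obtain x y r where "v = x # y # r"
    by (metis One_nat_def Suc_1 Suc_le_length_iff)
  with d s show ?thesis by auto
qed

lemma manip_intro:
  assumes "v' \<in> lin_orders C"
    "prefers (V i) (winner2 T n (V(i:=v'))) (winner2 T n V)"
    "\<forall>x\<in>C. \<forall>y\<in>C. x \<noteq> y \<longrightarrow> winner2 T n (V(i:=[x,y])) = winner2 T n (V(i:=v'))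
        \<or> prefers (V i) (winner2 T n (V(i:=v'))) (winner2 T n (V(i:=[x,y])))"
    "finite C" "2 \<le> card C"
  shows "gs_manip C T n V i v'"
  unfolding gs_manip_def
proof (intro conjI ballI)
  fix v'' assume "v'' \<in> lin_orders C"
  then obtain x y where xy: "take 2 v'' = [x,y]" "x \<in> C" "y \<in> C" "x \<noteq> y"
    using lin_take2 assms(4,5) by blast
  have "winner2 T n (V(i:=v'')) = winner2 T n (V(i:=[x,y]))"
    using winner_take[of T n V i v''] xy(1) by simp
  then show "winner2 T n (V(i := v'')) = winner2 T n (V(i := v')) \<or>
         prefers (V i) (winner2 T n (V(i := v'))) (winner2 T n (V(i := v'')))"
    using assms(3) xy by auto
qed (use assms in auto)

lemma score2_2:
  "score2 2 V c = (if c \<in> set (take 2 (V 0)) then 1 else 0) + (if c \<in> set (take 2 (V 1)) then 1 else 0)"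
proof -
  let ?P = "\<lambda>i. c \<in> set (take 2 (V i))"
  have e: "{i. i < 2 \<and> ?P i} = {i. i = 0 \<and> ?P i} \<union> {i. i = 1 \<and> ?P i}"
  proof (rule set_eqI)
    fix x :: nat
    have "x < 2 \<longleftrightarrow> x = 0 \<or> x = 1" by arith
    then show "x \<in> {i. i < 2 \<and> ?P i} \<longleftrightarrow> x \<in> {i. i = 0 \<and> ?P i} \<union> {i. i = 1 \<and> ?P i}"
      by blast
  qed
  have "card ({i. i = 0 \<and> ?P i} \<union> {i. i = 1 \<and> ?P i}) = card {i. i = 0 \<and> ?P i} + card {i. i = (1::nat) \<and> ?P i}"
    by (rule card_Un_disjoint) auto
  moreover have "card {i. i = 0 \<and> ?P i} = (if ?P 0 then 1 else 0)"
  proof -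
    have "{i. i = 0 \<and> ?P i} = (if ?P 0 then {0} else {})" by auto
    then show ?thesis by simp
  qed
  moreover have "card {i. i = (1::nat) \<and> ?P i} = (if ?P 1 then 1 else 0)"
  proof -
    have "{i. i = (1::nat) \<and> ?P i} = (if ?P 1 then {1} else {})" by auto
    then show ?thesis by simp
  qed
  ultimately show ?thesis unfolding score2_def e by simp
qed

definition sc :: "nat list \<Rightarrow> nat list \<Rightarrow> nat \<Rightarrow> nat" where
  "sc a b c = (if c \<in> set (take 2 a) then 1 else 0) + (if c \<in> set (take 2 b) then 1 else 0)"

definition w2 :: "nat list \<Rightarrow> nat list \<Rightarrow> nat list \<Rightarrow> nat" where
  "w2 T a b = hd (filter (\<lambda>c. list_all (\<lambda>d. sc a b d \<le> sc a b c) T) T)"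

lemma win2: "winner2 T 2 V = w2 T (V 0) (V 1)"
  unfolding winner2_def w2_def score2_2 sc_def by (simp add: list_all_iff)

lemma manip0:
  assumes "v' \<in> lin_orders (set T)" "2 \<le> length T" "distinct T"
    "prefers a (w2 T v' b) (w2 T a b)"
    "list_all (\<lambda>x. list_all (\<lambda>y. x \<noteq> y \<longrightarrow> w2 T [x,y] b = w2 T v' b \<or> prefers a (w2 T v' b) (w2 T [x,y] b)) T) T"
  shows "gs_manip (set T) T 2 (\<lambda>i. if i = 0 then a else b) 0 v'"
proof (rule manip_intro)
  show "finite (set T)" by simp
  show "2 \<le> card (set T)" using assms(2,3) by (simp add: distinct_card)
qed (use assms in \<open>simp_all add: win2 list_all_iff\<close>)

lemma manip1:
  assumes "v' \<in> lin_orders (set T)" "2 \<le> length T" "distinct T"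
    "prefers b (w2 T a v') (w2 T a b)"
    "list_all (\<lambda>x. list_all (\<lambda>y. x \<noteq> y \<longrightarrow> w2 T a [x,y] = w2 T a v' \<or> prefers b (w2 T a v') (w2 T a [x,y])) T) T"
  shows "gs_manip (set T) T 2 (\<lambda>i. if i = 0 then a else b) 1 v'"
proof (rule manip_intro)
  show "finite (set T)" by simp
  show "2 \<le> card (set T)" using assms(2,3) by (simp add: distinct_card)
qed (use assms in \<open>simp_all add: win2 list_all_iff\<close>)

lemma game_gen:
  assumes "a \<in> lin_orders (set T)" "b \<in> lin_orders (set T)" "distinct T"
    "gs_manip (set T) T 2 (\<lambda>i. if i = 0 then a else b) 0 v1"
    "gs_manip (set T) T 2 (\<lambda>i. if i = 0 then a else b) 1 v2"
    "{cmp a (w2 T v1 v2) (w2 T a v2), cmp b (w2 T v1 v2) (w2 T v1 b)} = S"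
  shows "wf_election (set T) T 2 (\<lambda>i. if i = 0 then a else b) \<and>
    gs_game_2x2 (set T) T 2 (\<lambda>i. if i = 0 then a else b) 0 1 v1 v2 \<and>
    game_type T 2 (\<lambda>i. if i = 0 then a else b) 0 1 v1 v2 = S"
proof -
  have "gs_manipulator (set T) T 2 (\<lambda>i. if i = 0 then a else b) i \<longleftrightarrow> i = 0 \<or> i = 1" for i
  proof
    assume "gs_manipulator (set T) T 2 (\<lambda>i. if i = 0 then a else b) i"
    then have "i < 2" unfolding gs_manipulator_def by blast
    then show "i = 0 \<or> i = 1" by linarith
  next
    assume "i = 0 \<or> i = 1"
    then show "gs_manipulator (set T) T 2 (\<lambda>i. if i = 0 then a else b) i"
      unfolding gs_manipulator_def using assms(4,5) by (elim disjE; simp; blast)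
  qed
  then have "{i. gs_manipulator (set T) T 2 (\<lambda>i. if i = 0 then a else b) i} = {0,1}"
    by blast
  moreover have "wf_election (set T) T 2 (\<lambda>i. if i = 0 then a else b)"
    unfolding wf_election_def using assms(1,2,3) by (simp add: lin_orders_def less_2_cases_iff)
  moreover have "game_type T 2 (\<lambda>i. if i = 0 then a else b) 0 1 v1 v2 = S"
    unfolding game_type_def W_def win2 using assms(6) by simp
  ultimately show ?thesis using assms(4,5) unfolding gs_game_2x2_def by simp
qed

abbreviation "T6 \<equiv> [0,1,2,3,4,5::nat]"

lemma g1: "wf_election (set T6) T6 2 (\<lambda>i. if i = 0 then [2,1,3,0,4,5] else [4,5,0,1,3,2]) \<and>
    gs_game_2x2 (set T6) T6 2 (\<lambda>i. if i = 0 then [2,1,3,0,4,5] else [4,5,0,1,3,2]) 0 1 [2,3,1,0,4,5] [0,3,1,2,4,5] \<and>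
    game_type T6 2 (\<lambda>i. if i = 0 then [2,1,3,0,4,5] else [4,5,0,1,3,2]) 0 1 [2,3,1,0,4,5] [0,3,1,2,4,5] = {Pos}"
  apply (rule game_gen)
       apply (auto simp: lin_orders_def)[1]
      apply (auto simp: lin_orders_def)[1]
     apply simp
    apply (rule manip0)
        apply (auto simp: lin_orders_def)[1]
       apply simp
      apply simp
     apply code_simp
    apply code_simp
   apply (rule manip1)
       apply (auto simp: lin_orders_def)[1]
      apply simp
     apply simp
    apply code_simp
   apply code_simp
  apply code_simp
  done

lemma g2: "wf_election (set T6) T6 2 (\<lambda>i. if i = 0 then [2,1,0,3,4,5] else [3,4,0,1,5,2]) \<and>
    gs_game_2x2 (set T6) T6 2 (\<lambda>i. if i = 0 then [2,1,0,3,4,5] else [3,4,0,1,5,2]) 0 1 [2,5,1,0,3,4] [0,5,3,4,1,2] \<and>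
    game_type T6 2 (\<lambda>i. if i = 0 then [2,1,0,3,4,5] else [3,4,0,1,5,2]) 0 1 [2,5,1,0,3,4] [0,5,3,4,1,2] = {Pos, Neg}"
  apply (rule game_gen)
       apply (auto simp: lin_orders_def)[1]
      apply (auto simp: lin_orders_def)[1]
     apply simp
    apply (rule manip0)
        apply (auto simp: lin_orders_def)[1]
       apply simp
      apply simp
     apply code_simp
    apply code_simp
   apply (rule manip1)
       apply (auto simp: lin_orders_def)[1]
      apply simp
     apply simp
    apply code_simp
   apply code_simp
  apply code_simp
  done

theorem mainTheorem6:
  shows "(\<exists>C T n V p1 p2 i1 i2. wf_election C T n V \<and> gs_game_2x2 C T n V p1 p2 i1 i2 \<and>
            game_type T n V p1 p2 i1 i2 = {Pos}) \<and>
         (\<exists>C T n V p1 p2 i1 i2. wf_election C T n V \<and> gs_game_2x2 C T n V p1 p2 i1 i2 \<and>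
            game_type T n V p1 p2 i1 i2 = {Pos, Neg})"
  using g1 g2 by blast

end
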